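(* Let $N\ge 2$ be an integer and index rows and columns of $N\times N$ matrices by $0,1,\dots,N-1$. Let $H$ be the real tridiagonal $N\times N$ matrix with diagonal entries $H_{n,n}=2n-N+1$ for $n=0,\dots,N-1$, superdiagonal entries $H_{n-1,n}=\sqrt{n(N-n)}$ and subdiagonal entries $H_{n,n-1}=-\sqrt{n(N-n)}$ for $n=1,\dots,N-1$ (all other entries zero). Let $J$ be the $N\times N$ nilpotent Jordan block, $J_{n,n+1}=1$ for $n=0,\dots,N-2$ and all other entries zero. Define the diagonal matrices $C$, $F$ and the matrix $P$ by $$C_{n,n}=\sqrt{\binom{N-1}{n}},\qquad F_{n,n}=(-1)^{N-n-1}\,(N-1-n)!,\qquad P_{m,q}=\binom{N-1-m}{q}\quad (n,m,q=0,\dots,N-1),$$ with the convention $\binom{a}{b}=0$ for $b>a$. Then $Q:=C\,P\,F$ is invertible and satisfies $H\,Q=Q\,J$, i.e. $Q^{-1}HQ=J$.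
   Context: $H$ is the discrete anharmonic-oscillator Hamiltonian $H^{(N)}_{(AO)}(\lambda)$ at its exceptional point $\lambda=0$; $Q$ is called the transition matrix (it brings $H$ to the Jordan block with eigenvalue $0$). *)

theory Defs
  imports "Jordan_Normal_Form.Matrix" "Jordan_Normal_Form.Determinant" Complex_Main
begin

definition H_AO :: "nat \<Rightarrow> real mat" where
  "H_AO N = mat N N (\<lambda>(i, j).
     if i = j then 2 * real i - real N + 1
     else if j = i + 1 then sqrt (real j * (real N - real j))
     else if i = j + 1 then - sqrt (real i * (real N - real i))
     else 0)"

definition J_blk :: "nat \<Rightarrow> real mat" where
  "J_blk N = mat N N (\<lambda>(i, j). if j = i + 1 then 1 else 0)"

definition C_mat :: "nat \<Rightarrow> real mat" where
  "C_mat N = mat N N (\<lambda>(i, j). if i = j then sqrt (real ((N - 1) choose i)) else 0)"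

definition F_mat :: "nat \<Rightarrow> real mat" where
  "F_mat N = mat N N (\<lambda>(i, j). if i = j then (-1) ^ (N - i - 1) * fact (N - 1 - i) else 0)"

definition P_mat :: "nat \<Rightarrow> real mat" where
  "P_mat N = mat N N (\<lambda>(m, q). real ((N - 1 - m) choose q))"

definition Q_mat :: "nat \<Rightarrow> real mat" where
  "Q_mat N = C_mat N * P_mat N * F_mat N"

end

theory Submission
  imports Defs
begin

definition sC :: "nat \<Rightarrow> nat \<Rightarrow> real" where "sC M m = sqrt (real (M choose m))"
definition fF :: "nat \<Rightarrow> nat \<Rightarrow> real" where "fF M q = (-1)^(M-q) * fact (M-q)"

lemma sum_dl: "(\<Sum>k = 0..<(n::nat). (if i = k then a k else 0) * (b k::real)) = (if i<n then a i * b i else 0)"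
proof -
  have "(\<lambda>k. (if i = k then a k else 0) * (b k::real)) = (\<lambda>k. if i = k then a k * b k else 0)" by auto
  then show ?thesis by (simp only:) (simp add: sum.delta)
qed
lemma sum_dr: "(\<Sum>k = 0..<(n::nat). (b k::real) * (if k = j then a k else 0)) = (if j<n then b j * a j else 0)"
proof -
  have "(\<lambda>k. (b k::real) * (if k = j then a k else 0)) = (\<lambda>k. if j = k then b k * a k else 0)" by auto
  then show ?thesis by (simp only:) (simp add: sum.delta)
qed

lemma C_car[simp]: "C_mat N \<in> carrier_mat N N" by (simp add: C_mat_def)
lemma P_car[simp]: "P_mat N \<in> carrier_mat N N" by (simp add: P_mat_def)
lemma F_car[simp]: "F_mat N \<in> carrier_mat N N" by (simp add: F_mat_def)
lemma H_car[simp]: "H_AO N \<in> carrier_mat N N" by (simp add: H_AO_def)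
lemma J_car[simp]: "J_blk N \<in> carrier_mat N N" by (simp add: J_blk_def)
lemma dims[simp]: "dim_row (C_mat N) = N" "dim_col (C_mat N) = N" "dim_row (P_mat N) = N" "dim_col (P_mat N) = N"
  "dim_row (F_mat N) = N" "dim_col (F_mat N) = N" "dim_row (H_AO N) = N" "dim_col (H_AO N) = N"
  "dim_row (J_blk N) = N" "dim_col (J_blk N) = N"
  by (simp_all add: C_mat_def P_mat_def F_mat_def H_AO_def J_blk_def)
lemma Q_car[simp]: "Q_mat N \<in> carrier_mat N N" unfolding Q_mat_def
  by (meson C_car P_car F_car mult_carrier_mat)

lemma Qdims[simp]: "dim_row (Q_mat N) = N" "dim_col (Q_mat N) = N"
  by (metis Q_car carrier_matD)+

lemma CP_entry:
  assumes "m < Suc M" "q < Suc M"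
  shows "(C_mat (Suc M) * P_mat (Suc M)) $$ (m,q) = sC M m * real((M-m) choose q)"
proof -
  have "(C_mat (Suc M) * P_mat (Suc M)) $$ (m,q) = row (C_mat (Suc M)) m \<bullet> col (P_mat (Suc M)) q"
    using assms by (simp add: C_mat_def P_mat_def)
  also have "\<dots> = (\<Sum>k = 0..<Suc M. (if m = k then sC M k else 0) * real ((M - k) choose q))"
    using assms by (auto simp add: scalar_prod_def C_mat_def P_mat_def sC_def intro!: sum.cong)
  also have "\<dots> = sC M m * real((M-m) choose q)" using assms by (simp only: sum_dl) simp
  finally show ?thesis .
qed

lemma Q_entry:
  assumes "m < Suc M" "q < Suc M"
  shows "Q_mat (Suc M) $$ (m,q) = sC M m * real((M-m) choose q) * fF M q"
proof -
  have "Q_mat (Suc M) $$ (m,q) = row (C_mat (Suc M) * P_mat (Suc M)) m \<bullet> col (F_mat (Suc M)) q"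
    using assms unfolding Q_mat_def by (subst index_mult_mat) (auto simp: F_mat_def)
  also have "\<dots> = (\<Sum>k = 0..<Suc M. (C_mat (Suc M) * P_mat (Suc M)) $$ (m,k) * (if k = q then fF M k else 0))"
    unfolding scalar_prod_def using assms by (auto simp: F_mat_def fF_def intro!: sum.cong)
  also have "\<dots> = sC M m * real((M-m) choose q) * fF M q" using assms by (simp only: sum_dr) (simp add: CP_entry del: index_mult_mat)
  finally show ?thesis .
qed


lemma E1: "Suc p * (n choose Suc p) = (n - p) * (n choose p)"
  using binomial_absorption[of p n] binomial_absorb_comp[of n p] by simp

lemma E1r: "real (Suc p) * real (n choose Suc p) = (real n - real p) * real (n choose p)"
proof (cases "p \<le> n")
  case True
  have "real (Suc p * (n choose Suc p)) = real ((n - p) * (n choose p))" using E1 by metis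
  then show ?thesis using True by (simp add: of_nat_diff algebra_simps)
next
  case False
  then show ?thesis by (simp add: binomial_eq_0)
qed

lemma binid:
  "(real m - real k) * real (k choose Suc p) + real k * real ((k-1) choose Suc p)
     - real m * real (Suc k choose Suc p) = - (real m + real k - real p) * real (k choose p)"
proof (cases k)
  case 0
  then show ?thesis by (cases p) auto
next
  case (Suc j)
  have pas: "real (Suc j choose Suc p) = real (j choose p) + real (j choose Suc p)" by simp
  have pas2: "real (Suc (Suc j) choose Suc p) = real (Suc j choose p) + real (Suc j choose Suc p)" by simp
  have st: "real (Suc p) * real (Suc j choose Suc p) = real (Suc j) * real (j choose p)"
    using Suc_times_binomial[of p j] by (metis of_nat_mult)
  have e: "real (Suc p) * real (Suc j choose Suc p) = (real (Suc j) - real p) * real (Suc j choose p)"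
    by (rule E1r)
  show ?thesis unfolding Suc using pas pas2 st e
    by (simp add: algebra_simps)
qed

lemma binid0:
  "(real m - real k) * real (k choose 0) + real k * real ((k-1) choose 0)
     - real m * real (Suc k choose 0) = 0"
  by simp

lemma sq1:
  assumes "m < M"
  shows "sqrt (real (Suc m) * (real (Suc M) - real (Suc m))) * sC M (Suc m) = (real M - real m) * sC M m"
proof -
  have "real (Suc m) * real (M choose Suc m) = (real M - real m) * real (M choose m)" by (rule E1r)
  then have E': "(real M - real m) * (real (Suc m) * real (M choose Suc m)) = (real M - real m) * ((real M - real m) * real (M choose m))"
    by simp
  have "real (Suc m) * (real (Suc M) - real (Suc m)) * real (M choose Suc m) = (real M - real m)^2 * real (M choose m)"
    using E' unfolding power2_eq_square by (simp add: algebra_simps; linarith)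
  then have "sqrt (real (Suc m) * (real (Suc M) - real (Suc m))) * sC M (Suc m) = sqrt ((real M - real m)^2 * real (M choose m))"
    unfolding sC_def by (metis real_sqrt_mult)
  also have "\<dots> = (real M - real m) * sC M m" using assms unfolding sC_def by (simp add: real_sqrt_mult)
  finally show ?thesis .
qed

lemma sq2:
  assumes "m < M"
  shows "sqrt (real (Suc m) * (real (Suc M) - real (Suc m))) * sC M m = real (Suc m) * sC M (Suc m)"
proof -
  have "real (Suc m) * real (M choose Suc m) = (real M - real m) * real (M choose m)" by (rule E1r)
  then have E': "real (Suc m) * (real (Suc m) * real (M choose Suc m)) = real (Suc m) * ((real M - real m) * real (M choose m))"
    by simp
  have "real (Suc m) * (real (Suc M) - real (Suc m)) * real (M choose m) = (real (Suc m))^2 * real (M choose Suc m)"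
    using E' unfolding power2_eq_square by (simp add: algebra_simps; linarith)
  then have "sqrt (real (Suc m) * (real (Suc M) - real (Suc m))) * sC M m = sqrt ((real (Suc m))^2 * real (M choose Suc m))"
    unfolding sC_def by (metis real_sqrt_mult)
  also have "\<dots> = real (Suc m) * sC M (Suc m)" unfolding sC_def by (simp add: real_sqrt_mult)
  finally show ?thesis .
qed

lemma fFrec: "p < M \<Longrightarrow> fF M p = - (real M - real p) * fF M (Suc p)"
proof -
  assume "p < M"
  then obtain r where r: "M - p = Suc r" "M - Suc p = r" by (metis Suc_diff_Suc)
  have "real M - real p = real (Suc r)" using r `p < M` by (simp add: of_nat_diff)
  then show ?thesis unfolding fF_def r by (simp add: algebra_simps)
qed


lemma key:
  assumes "m \<le> M" "q \<le> M"
  shows "(2 * real m - real M) * (sC M m * real ((M-m) choose q) * fF M q)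
     + (if m < M then (real M - real m) * sC M m * real ((M - Suc m) choose q) * fF M q else 0)
     - (if 0 < m then real m * sC M m * real ((M - (m-1)) choose q) * fF M q else 0)
     = (if 0 < q then sC M m * real ((M-m) choose (q-1)) * fF M (q-1) else 0)"
proof -
  define k where "k = M - m"
  have kr: "real k = real M - real m" using assms unfolding k_def by (simp add: of_nat_diff)
  have t2: "(if m < M then (real M - real m) * sC M m * real ((M - Suc m) choose q) * fF M q else 0)
     = sC M m * fF M q * (real k * real ((k-1) choose q))"
  proof (cases "m < M")
    case True
    then have "M - Suc m = k - 1" "real M - real m = real k" using kr unfolding k_def by auto
    then show ?thesis using True by simp
  next
    case False
    then have "k = 0" using assms unfolding k_def by simp
    then show ?thesis using False by simp
  qed
  have t3: "(if 0 < m then real m * sC M m * real ((M - (m-1)) choose q) * fF M q else 0)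
     = sC M m * fF M q * (real m * real (Suc k choose q))"
  proof (cases "0 < m")
    case True
    then have "M - (m - 1) = Suc k" using assms unfolding k_def by simp
    then show ?thesis using True by simp
  next
    case False
    then show ?thesis by simp
  qed
  have t1: "(2 * real m - real M) * (sC M m * real ((M-m) choose q) * fF M q)
     = sC M m * fF M q * ((real m - real k) * real (k choose q))"
    unfolding kr k_def[symmetric] by (simp add: algebra_simps)
  have lhs: "(2 * real m - real M) * (sC M m * real ((M-m) choose q) * fF M q)
     + (if m < M then (real M - real m) * sC M m * real ((M - Suc m) choose q) * fF M q else 0)
     - (if 0 < m then real m * sC M m * real ((M - (m-1)) choose q) * fF M q else 0)
     = sC M m * fF M q * ((real m - real k) * real (k choose q) + real k * real ((k-1) choose q)
        - real m * real (Suc k choose q))"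
    unfolding t1 t2 t3 by (simp add: algebra_simps)
  show ?thesis
  proof (cases q)
    case 0
    then show ?thesis unfolding lhs by simp
  next
    case (Suc p)
    have pM: "p < M" using assms Suc by simp
    have "real m + real k - real p = real M - real p" using kr by simp
    have "sC M m * fF M q * ((real m - real k) * real (k choose q) + real k * real ((k-1) choose q)
        - real m * real (Suc k choose q)) = sC M m * fF M (Suc p) * (- (real M - real p) * real (k choose p))"
      unfolding Suc binid using `real m + real k - real p = real M - real p` by simp
    also have "\<dots> = sC M m * real (k choose p) * fF M p" unfolding fFrec[OF pM] by simp
    finally show ?thesis unfolding lhs using Suc k_def by simp
  qed
qed


lemma sum_suc_delta: "(\<Sum>k = 0..<(n::nat). if Suc k = m then (g k::real) else 0) = (if 0 < m \<and> m \<le> n then g (m-1) else 0)"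
proof (cases m)
  case 0
  then show ?thesis by simp
next
  case (Suc m')
  have "(\<Sum>k = 0..<n. if Suc k = m then g k else 0) = (\<Sum>k = 0..<n. if k = m' then g k else 0)"
    using Suc by (intro sum.cong) auto
  then show ?thesis using Suc by (simp add: sum.delta')
qed

lemma H_entry: "i < N \<Longrightarrow> j < N \<Longrightarrow> H_AO N $$ (i,j) = (if i = j then 2 * real i - real N + 1
     else if j = i + 1 then sqrt (real j * (real N - real j))
     else if i = j + 1 then - sqrt (real i * (real N - real i))
     else 0)"
  by (simp add: H_AO_def)

lemma HQ_entry:
  assumes "m < Suc M" "q < Suc M"
  shows "(H_AO (Suc M) * Q_mat (Suc M)) $$ (m,q) =
    (2 * real m - real M) * Q_mat (Suc M) $$ (m,q)
    + (if m < M then sqrt (real (Suc m) * (real (Suc M) - real (Suc m))) * Q_mat (Suc M) $$ (Suc m, q) else 0)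
    + (if 0 < m then - sqrt (real m * (real (Suc M) - real m)) * Q_mat (Suc M) $$ (m - 1, q) else 0)"
proof -
  let ?Q = "Q_mat (Suc M)"
  have "(H_AO (Suc M) * ?Q) $$ (m,q) = (\<Sum>k = 0..<Suc M. H_AO (Suc M) $$ (m,k) * ?Q $$ (k,q))"
    using assms by (subst index_mult_mat) (auto simp: scalar_prod_def simp del: sum.op_ivl_Suc intro!: sum.cong)
  also have "\<dots> = (\<Sum>k = 0..<Suc M. (if k = m then (2 * real m - real M) * ?Q $$ (k,q) else 0)
      + (if k = Suc m then sqrt (real (Suc m) * (real (Suc M) - real (Suc m))) * ?Q $$ (k,q) else 0)
      + (if Suc k = m then - sqrt (real m * (real (Suc M) - real m)) * ?Q $$ (k,q) else 0))"
    using assms by (intro sum.cong) (auto simp: H_entry dest: less_antisym)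
  also have "\<dots> = (2 * real m - real M) * ?Q $$ (m,q)
    + (if m < M then sqrt (real (Suc m) * (real (Suc M) - real (Suc m))) * ?Q $$ (Suc m, q) else 0)
    + (if 0 < m then - sqrt (real m * (real (Suc M) - real m)) * ?Q $$ (m - 1, q) else 0)"
  proof -
    have "m < M \<or> m = M" using assms by auto
    then show ?thesis using assms by (simp only: sum.distrib sum.delta' sum_suc_delta) auto
  qed
  finally show ?thesis .
qed

lemma QJ_entry:
  assumes "m < Suc M" "q < Suc M"
  shows "(Q_mat (Suc M) * J_blk (Suc M)) $$ (m,q) = (if 0 < q then Q_mat (Suc M) $$ (m, q - 1) else 0)"
proof -
  let ?Q = "Q_mat (Suc M)"
  have "(?Q * J_blk (Suc M)) $$ (m,q) = (\<Sum>k = 0..<Suc M. if Suc k = q then ?Q $$ (m,k) else 0)"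
    using assms by (subst index_mult_mat) (auto simp: scalar_prod_def J_blk_def simp del: sum.op_ivl_Suc intro!: sum.cong)
  also have "\<dots> = (if 0 < q then ?Q $$ (m, q - 1) else 0)"
    using assms by (simp only: sum_suc_delta) auto
  finally show ?thesis .
qed

lemma HQ_QJ:
  shows "H_AO (Suc M) * Q_mat (Suc M) = Q_mat (Suc M) * J_blk (Suc M)"
proof (rule eq_matI)
  fix i j assume i: "i < dim_row (Q_mat (Suc M) * J_blk (Suc M))" and j: "j < dim_col (Q_mat (Suc M) * J_blk (Suc M))"
  have im: "i < Suc M" "j < Suc M" using i j by auto
  have a: "(if i < M then sqrt (real (Suc i) * (real (Suc M) - real (Suc i))) * Q_mat (Suc M) $$ (Suc i, j) else 0)
     = (if i < M then (real M - real i) * sC M i * real ((M - Suc i) choose j) * fF M j else 0)"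
  proof (cases "i < M")
    case True
    then show ?thesis using sq1[OF True] im Q_entry[of "Suc i" M j]
      by (simp add: mult.assoc[symmetric])
  qed simp
  have b: "(if 0 < i then - sqrt (real i * (real (Suc M) - real i)) * Q_mat (Suc M) $$ (i - 1, j) else 0)
     = - (if 0 < i then real i * sC M i * real ((M - (i-1)) choose j) * fF M j else 0)"
  proof (cases i)
    case (Suc i')
    have "i' < M" using im Suc by simp
    then show ?thesis using sq2[OF `i' < M`] im Q_entry[of i' M j] Suc
      by (simp add: mult.assoc[symmetric])
  qed simp
  show "(H_AO (Suc M) * Q_mat (Suc M)) $$ (i, j) = (Q_mat (Suc M) * J_blk (Suc M)) $$ (i, j)"
    unfolding HQ_entry[OF im] QJ_entry[OF im] a b Q_entry[OF im]
    using key[of i M j] im by (auto simp: Q_entry)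
qed auto


definition Rm :: "nat \<Rightarrow> real mat" where "Rm N = mat N N (\<lambda>(i,j). if i + j = N - 1 then 1 else 0)"
definition Lm :: "nat \<Rightarrow> real mat" where "Lm N = mat N N (\<lambda>(i,j). real (i choose j))"

lemma sum_delta_eq: "(\<Sum>k = 0..<(n::nat). if k = a then (g k::real) else 0) = (if a < n then g a else 0)"
  by (simp add: sum.delta')

lemma mult_entry: "A \<in> carrier_mat n k \<Longrightarrow> B \<in> carrier_mat k m \<Longrightarrow> i < n \<Longrightarrow> j < m \<Longrightarrow>
  (A * B) $$ (i,j) = (\<Sum>l = 0..<k. A $$ (i,l) * B $$ (l,j))"
  by (subst index_mult_mat) (auto simp: scalar_prod_def simp del: sum.op_ivl_Suc intro!: sum.cong)

lemma P_RL: "P_mat N = Rm N * Lm N"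
proof (rule eq_matI)
  fix i j assume i: "i < dim_row (Rm N * Lm N)" and j: "j < dim_col (Rm N * Lm N)"
  then have ij: "i < N" "j < N" by (auto simp: Rm_def Lm_def)
  have "(Rm N * Lm N) $$ (i,j) = (\<Sum>l = 0..<N. Rm N $$ (i,l) * Lm N $$ (l,j))"
    by (rule mult_entry) (auto simp: Rm_def Lm_def ij)
  also have "\<dots> = (\<Sum>k = 0..<N. if k = N - 1 - i then real (k choose j) else 0)"
  proof (rule sum.cong[OF refl])
    fix l assume "l \<in> {0..<N}" then show "Rm N $$ (i,l) * Lm N $$ (l,j) = (if l = N - 1 - i then real (l choose j) else 0)"
      using ij by (auto simp: Rm_def Lm_def)
  qed
  also have "\<dots> = real ((N - 1 - i) choose j)" using ij by (simp only: sum_delta_eq) simp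
  finally show "P_mat N $$ (i, j) = (Rm N * Lm N) $$ (i, j)" using ij by (simp add: P_mat_def)
qed (auto simp: Rm_def Lm_def P_mat_def)

lemma RR: "Rm N * Rm N = 1\<^sub>m N"
proof (rule eq_matI)
  fix i j assume i: "i < dim_row (1\<^sub>m N :: real mat)" and j: "j < dim_col (1\<^sub>m N :: real mat)"
  then have ij: "i < N" "j < N" by auto
  have "(Rm N * Rm N) $$ (i,j) = (\<Sum>l = 0..<N. Rm N $$ (i,l) * Rm N $$ (l,j))"
    by (rule mult_entry) (auto simp: Rm_def ij)
  also have "\<dots> = (\<Sum>k = 0..<N. if k = N - 1 - i then (if k + j = N - 1 then 1 else 0) else 0)"
  proof (rule sum.cong[OF refl])
    fix l assume "l \<in> {0..<N}" then show "Rm N $$ (i,l) * Rm N $$ (l,j) = (if l = N - 1 - i then (if l + j = N - 1 then 1 else 0) else 0)"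
      using ij by (auto simp: Rm_def)
  qed
  also have "\<dots> = (if i = j then 1 else 0)" using ij by (simp only: sum_delta_eq) auto
  finally show "(Rm N * Rm N) $$ (i, j) = (1\<^sub>m N :: real mat) $$ (i, j)" using ij by simp
qed (auto simp: Rm_def)

lemma detR: "det (Rm N) \<noteq> 0"
proof -
  have "det (Rm N * Rm N) = det (Rm N) * det (Rm N)" by (rule det_mult) (auto simp: Rm_def)
  then show ?thesis using RR[of N] by auto
qed

lemma detL: "det (Lm N) = 1"
proof -
  have "det (Lm N) = prod_list (diag_mat (Lm N))"
    by (rule det_lower_triangular[of N]) (auto simp: Lm_def)
  also have "diag_mat (Lm N) = map (\<lambda>_. 1) [0..<N]" by (auto simp: diag_mat_def Lm_def)
  also have "prod_list \<dots> = 1" by (induct N) auto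
  finally show ?thesis .
qed

lemma detP: "det (P_mat N) \<noteq> 0"
  unfolding P_RL using detR detL by (subst det_mult[of _ N]) (auto simp: Rm_def Lm_def)

lemma detC: "det (C_mat N) \<noteq> 0"
proof -
  have "det (C_mat N) = prod_list (diag_mat (C_mat N))"
    by (rule det_lower_triangular[of N]) (auto simp: C_mat_def)
  moreover have "0 \<notin> set (diag_mat (C_mat N))" by (auto simp: diag_mat_def C_mat_def)
  ultimately show ?thesis by (simp add: prod_list_zero_iff)
qed

lemma detF: "det (F_mat N) \<noteq> 0"
proof -
  have "det (F_mat N) = prod_list (diag_mat (F_mat N))"
    by (rule det_lower_triangular[of N]) (auto simp: F_mat_def)
  moreover have "0 \<notin> set (diag_mat (F_mat N))" by (auto simp: diag_mat_def F_mat_def)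
  ultimately show ?thesis by (simp add: prod_list_zero_iff)
qed

lemma detQ: "det (Q_mat N) \<noteq> 0"
proof -
  have "det (Q_mat N) = det (C_mat N * P_mat N) * det (F_mat N)"
    unfolding Q_mat_def by (rule det_mult[of _ N]) auto
  also have "\<dots> = det (C_mat N) * det (P_mat N) * det (F_mat N)"
    by (subst det_mult[of _ N]) auto
  finally show ?thesis using detC detP detF by simp
qed

lemma inv_Q: "invertible_mat (Q_mat N)"
proof -
  have "Q_mat N \<in> Units (ring_mat TYPE(real) N ())"
    by (rule det_non_zero_imp_unit[OF Q_car detQ])
  then obtain B where B: "B \<in> carrier_mat N N" "B * Q_mat N = 1\<^sub>m N" "Q_mat N * B = 1\<^sub>m N"
    unfolding Units_def ring_mat_def by auto
  then show ?thesis unfolding invertible_mat_def inverts_mat_def using B by auto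
qed

theorem mainTheorem2:
  fixes N :: nat
  assumes "N \<ge> 2"
  shows "invertible_mat (Q_mat N) \<and> H_AO N * Q_mat N = Q_mat N * J_blk N"
proof -
  obtain M where "N = Suc M" using assms by (cases N) auto
  then show ?thesis using inv_Q HQ_QJ by simp
qed

end
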